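(* Let $S$ be a left denominator set of a ring $R$ whose core $S_c$ is nonempty. Then (1) $SS_c\subseteq S_c$; and (2) for every $s\in S$ there exists $t\in S$ such that $ts\in S_c$.
   Context: All rings are associative with $1$. A multiplicative subset $S$ of $R$ ($1\in S$, $0\notin S$, closed under multiplication) is a left Ore set if $Sr\cap Rs\neq\emptyset$ for all $r\in R$, $s\in S$; for it, $\mathrm{ass}(S):=\{r\in R: sr=0\text{ for some } s\in S\}$. A left Ore set $S$ is a left denominator set if $rs=0$ ($r\in R$, $s\in S$) implies $tr=0$ for some $t\in S$. For $s\in R$, $\ker(s\cdot):=\{r\in R: sr=0\}$. The core of a left Ore set $S$ is $S_c:=\{s\in S:\ker(s\cdot)=\mathrm{ass}(S)\}$. $SS_c$ denotes $\{st: s\in S, t\in S_c\}$. *)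

theory Defs
  imports Main
begin

definition mult_subset :: "'a::ring_1 set \<Rightarrow> bool" where
  "mult_subset S \<longleftrightarrow> 1 \<in> S \<and> 0 \<notin> S \<and> (\<forall>s\<in>S. \<forall>t\<in>S. s * t \<in> S)"

definition left_ore_set :: "'a::ring_1 set \<Rightarrow> bool" where
  "left_ore_set S \<longleftrightarrow> mult_subset S \<and>
     (\<forall>r s. s \<in> S \<longrightarrow> (\<exists>t\<in>S. \<exists>r'. t * r = r' * s))"

definition ass :: "'a::ring_1 set \<Rightarrow> 'a set" where
  "ass S = {r. \<exists>s\<in>S. s * r = 0}"

definition left_denominator_set :: "'a::ring_1 set \<Rightarrow> bool" where
  "left_denominator_set S \<longleftrightarrow> left_ore_set S \<and>
     (\<forall>r. \<forall>s\<in>S. r * s = 0 \<longrightarrow> (\<exists>t\<in>S. t * r = 0))"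

definition left_kernel :: "'a::ring_1 \<Rightarrow> 'a set" where
  "left_kernel s = {r. s * r = 0}"

definition core :: "'a::ring_1 set \<Rightarrow> 'a set" where
  "core S = {s \<in> S. left_kernel s = ass S}"

definition set_prod :: "'a::ring_1 set \<Rightarrow> 'a set \<Rightarrow> 'a set" where
  "set_prod A B = {s * t | s t. s \<in> A \<and> t \<in> B}"

end

theory Submission
  imports Defs
begin

theorem lemma4p1:
  fixes S :: "'a::ring_1 set"
  assumes "left_denominator_set S"
    and "core S \<noteq> {}"
  shows "set_prod S (core S) \<subseteq> core S \<and>
    (\<forall>s\<in>S. \<exists>t\<in>S. t * s \<in> core S)"
proof -
  have ore: "left_ore_set S" using assms(1) left_denominator_set_def by blast
  have mul: "\<And>s t. s \<in> S \<Longrightarrow> t \<in> S \<Longrightarrow> s * t \<in> S"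
    using ore unfolding left_ore_set_def mult_subset_def by blast
  have oreC: "\<And>r s. s \<in> S \<Longrightarrow> \<exists>t\<in>S. \<exists>r'. t * r = r' * s"
    using ore unfolding left_ore_set_def by blast
  obtain c where c: "c \<in> core S" using assms(2) by blast
  have cS: "c \<in> S" and ck: "\<And>x. c * x = 0 \<longleftrightarrow> x \<in> ass S"
    using c unfolding core_def left_kernel_def by auto
  have kerS: "\<And>u x. u \<in> S \<Longrightarrow> u * x = 0 \<Longrightarrow> x \<in> ass S"
    unfolding ass_def by blast
  have shift: "\<And>s x. s \<in> S \<Longrightarrow> x \<in> ass S \<Longrightarrow> s * x \<in> ass S"
  proof -
    fix s x assume s: "s \<in> S" and x: "x \<in> ass S"
    then obtain u where u: "u \<in> S" "u * x = 0" unfolding ass_def by blast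
    obtain t r' where t: "t \<in> S" "t * s = r' * u" using oreC[OF u(1), of s] by blast
    have "t * (s * x) = 0" by (metis mult.assoc t(2) u(2) mult_zero_right)
    thus "s * x \<in> ass S" using t(1) kerS by blast
  qed
  have p1: "set_prod S (core S) \<subseteq> core S"
  proof
    fix y assume "y \<in> set_prod S (core S)"
    then obtain s d where y: "y = s * d" "s \<in> S" "d \<in> core S" unfolding set_prod_def by blast
    have dS: "d \<in> S" and dk: "\<And>x. d * x = 0 \<longleftrightarrow> x \<in> ass S"
      using y(3) unfolding core_def left_kernel_def by auto
    have yS: "y \<in> S" using y mul dS by blast
    have "\<And>x. y * x = 0 \<longleftrightarrow> x \<in> ass S"
      using kerS[OF yS] dk y(1) by (metis mult.assoc mult_zero_right)
    thus "y \<in> core S" using yS unfolding core_def left_kernel_def by auto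
  qed
  have p2: "\<forall>s\<in>S. \<exists>t\<in>S. t * s \<in> core S"
  proof
    fix s assume s: "s \<in> S"
    have csS: "c * s \<in> S" using mul cS s by blast
    have "\<And>x. (c * s) * x = 0 \<longleftrightarrow> x \<in> ass S"
    proof
      fix x assume "(c * s) * x = 0" thus "x \<in> ass S" using kerS csS by blast
    next
      fix x assume "x \<in> ass S" hence "s * x \<in> ass S" using shift s by blast
      thus "(c * s) * x = 0" using ck by (simp add: mult.assoc)
    qed
    hence "c * s \<in> core S" using csS unfolding core_def left_kernel_def by auto
    thus "\<exists>t\<in>S. t * s \<in> core S" using cS by blast
  qed
  show ?thesis using p1 p2 by blast
qed

end
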